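(* For every integer $s\geq 3$, the graph $\operatorname{KG}(2s+2,2)_{s-\operatorname{stab}}$ is not hom-idempotent, i.e., there is no homomorphism from $\operatorname{KG}(2s+2,2)_{s-\operatorname{stab}}\Box\operatorname{KG}(2s+2,2)_{s-\operatorname{stab}}$ to $\operatorname{KG}(2s+2,2)_{s-\operatorname{stab}}$.
   Context: For integers $s,k\geq 2$ and $n\geq ks$, a subset $S\subseteq[n]=\{1,\dots,n\}$ is $s$-stable if $s\leq |i-j|\leq n-s$ for all distinct $i,j\in S$. The $s$-stable Kneser graph $\operatorname{KG}(n,k)_{s-\operatorname{stab}}$ has as vertices the $s$-stable $k$-subsets of $[n]$, two vertices being adjacent iff they are disjoint. $G\Box H$ denotes the cartesian product of graphs (vertex set $V(G)\times V(H)$, $(g,h)\sim(g',h')$ iff one coordinate is equal and the other coordinates are adjacent). A homomorphism is an edge-preserving map between vertex sets. *)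

theory Defs
  imports Main
begin

definition s_stable :: "nat \<Rightarrow> nat \<Rightarrow> nat set \<Rightarrow> bool" where
  "s_stable n s S \<longleftrightarrow> S \<subseteq> {1..n} \<and>
     (\<forall>i\<in>S. \<forall>j\<in>S. i \<noteq> j \<longrightarrow>
        s \<le> nat \<bar>int i - int j\<bar> \<and> nat \<bar>int i - int j\<bar> \<le> n - s)"

definition stab_kneser_verts :: "nat \<Rightarrow> nat \<Rightarrow> nat \<Rightarrow> nat set set" where
  "stab_kneser_verts n k s = {S. s_stable n s S \<and> card S = k}"

definition stab_kneser_adj :: "nat set \<Rightarrow> nat set \<Rightarrow> bool" where
  "stab_kneser_adj A B \<longleftrightarrow> A \<inter> B = {}"

definition cart_prod_verts :: "'a set \<Rightarrow> 'b set \<Rightarrow> ('a \<times> 'b) set" where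
  "cart_prod_verts V1 V2 = V1 \<times> V2"

definition cart_prod_adj ::
  "('a \<Rightarrow> 'a \<Rightarrow> bool) \<Rightarrow> ('b \<Rightarrow> 'b \<Rightarrow> bool) \<Rightarrow> ('a \<times> 'b) \<Rightarrow> ('a \<times> 'b) \<Rightarrow> bool" where
  "cart_prod_adj E1 E2 p q \<longleftrightarrow>
     (fst p = fst q \<and> E2 (snd p) (snd q)) \<or> (snd p = snd q \<and> E1 (fst p) (fst q))"

definition graph_hom ::
  "'a set \<Rightarrow> ('a \<Rightarrow> 'a \<Rightarrow> bool) \<Rightarrow> 'b set \<Rightarrow> ('b \<Rightarrow> 'b \<Rightarrow> bool) \<Rightarrow> ('a \<Rightarrow> 'b) \<Rightarrow> bool" where
  "graph_hom V1 E1 V2 E2 f \<longleftrightarrow>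
     (\<forall>x\<in>V1. f x \<in> V2) \<and> (\<forall>x\<in>V1. \<forall>y\<in>V1. E1 x y \<longrightarrow> E2 (f x) (f y))"

end

theory Submission
  imports Defs
begin


definition A :: "nat \<Rightarrow> nat \<Rightarrow> nat \<Rightarrow> bool" where
  "A s a b \<longleftrightarrow> 1 \<le> a \<and> a \<le> 2*s+2 \<and> 1 \<le> b \<and> b \<le> 2*s+2 \<and>
     ((a + s \<le> b \<and> b \<le> a + s + 2) \<or> (b + s \<le> a \<and> a \<le> b + s + 2))"

abbreviation VV :: "nat \<Rightarrow> nat set set" where
  "VV s \<equiv> stab_kneser_verts (2*s+2) 2 s"

lemma A_sym: "A s a b \<Longrightarrow> A s b a"
  unfolding A_def by auto

lemma A_neq: "1 \<le> s \<Longrightarrow> A s a b \<Longrightarrow> a \<noteq> b"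
  unfolding A_def by auto

lemma memV:
  assumes s: "1 \<le> s"
  shows "v \<in> VV s \<longleftrightarrow> (\<exists>a b. A s a b \<and> v = {a,b})"
proof
  assume "v \<in> VV s"
  then have st: "s_stable (2*s+2) s v" and c: "card v = 2"
    unfolding stab_kneser_verts_def by auto
  from c obtain a b where ab: "a \<noteq> b" "v = {a,b}" by (meson card_2_iff)
  with st have "A s a b" unfolding s_stable_def A_def by auto
  with ab show "\<exists>a b. A s a b \<and> v = {a,b}" by blast
next
  assume "\<exists>a b. A s a b \<and> v = {a,b}"
  then obtain a b where ab: "A s a b" "v = {a,b}" by blast
  then have "a \<noteq> b" using A_neq s by blast
  then have "card v = 2" using ab by auto
  moreover have "s_stable (2*s+2) s v"
    using ab unfolding s_stable_def A_def by auto
  ultimately show "v \<in> VV s" unfolding stab_kneser_verts_def by auto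
qed

lemma no_triangle:
  assumes s: "3 \<le> s" and "A s a b" "A s b c" "A s a c"
  shows False
  using assms unfolding A_def by linarith


definition S :: "nat \<Rightarrow> nat \<Rightarrow> nat set set" where
  "S s c = {v \<in> VV s. c \<in> v}"

lemma VV_sub: "v \<in> VV s \<Longrightarrow> v \<subseteq> {1..2*s+2}"
  unfolding stab_kneser_verts_def s_stable_def by auto

lemma VV_card: "v \<in> VV s \<Longrightarrow> card v = 2"
  unfolding stab_kneser_verts_def by auto

lemma finite_VV: "finite (VV s)"
proof -
  have "VV s \<subseteq> Pow {1..2*s+2}" using VV_sub by auto
  then show ?thesis by (rule finite_subset) auto
qed

lemma pair_cases: "{x,y} = {a,b} \<Longrightarrow> (x = a \<and> y = b) \<or> (x = b \<and> y = a)"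
  by (auto simp: doubleton_eq_iff)

lemma star_common:
  assumes s: "3 \<le> s" and I: "I \<subseteq> VV s" "I \<noteq> {}"
    and pw: "\<forall>v\<in>I. \<forall>w\<in>I. v \<inter> w \<noteq> {}"
  shows "\<exists>c. \<forall>v\<in>I. c \<in> v"
proof -
  have s1: "1 \<le> s" using s by simp
  obtain v0 where v0: "v0 \<in> I" using I by auto
  then have "v0 \<in> VV s" using I by auto
  then obtain a b where ab: "A s a b" "v0 = {a,b}" using memV[OF s1] by blast
  show ?thesis
  proof (cases "\<forall>v\<in>I. a \<in> v")
    case True then show ?thesis by blast
  next
    case False
    then obtain w where w: "w \<in> I" "a \<notin> w" by blast
    have "v0 \<inter> w \<noteq> {}" using pw v0 w(1) by blast
    then have bw: "b \<in> w" using ab(2) w(2) by auto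
    have "w \<in> VV s" using I w by auto
    then obtain b' d where bd: "A s b' d" "w = {b',d}" using memV[OF s1] by blast
    have "\<exists>e. A s b e \<and> w = {b,e}"
    proof (cases "b' = b")
      case True then show ?thesis using bd by blast
    next
      case False
      then have "d = b" using bd(2) bw by auto
      then show ?thesis using bd A_sym by (metis insert_commute)
    qed
    then obtain e where e: "A s b e" "w = {b,e}" by blast
    have "\<forall>z\<in>I. b \<in> z"
    proof
      fix z assume z: "z \<in> I"
      show "b \<in> z"
      proof (rule ccontr)
        assume nb: "b \<notin> z"
        have "v0 \<inter> z \<noteq> {}" using pw v0 z by blast
        then have az: "a \<in> z" using ab(2) nb by auto
        have "w \<inter> z \<noteq> {}" using pw w(1) z by blast
        then have ez: "e \<in> z" using e(2) nb by auto
        have ea: "e \<noteq> a" using w(2) e(2) by auto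
        have "z \<in> VV s" using I z by auto
        then obtain x y where xy: "A s x y" "z = {x,y}" using memV[OF s1] by blast
        have "{x,y} = {a,e}" using xy(2) az ez ea A_neq[OF s1 xy(1)] by auto
        then have "(x = a \<and> y = e) \<or> (x = e \<and> y = a)" by (rule pair_cases)
        then have "A s a e" using xy(1) A_sym by blast
        then show False using no_triangle[OF s] ab(1) e(1) by blast
      qed
    qed
    then show ?thesis by blast
  qed
qed

lemma nbr_card:
  assumes s: "3 \<le> s" and c: "1 \<le> c" "c \<le> 2*s+2"
  shows "card {d. A s c d} = 3"
proof -
  consider "c \<le> s" | "c = s+1" | "c = s+2" | "s + 3 \<le> c" by linarith
  then show ?thesis
  proof cases
    case 1
    then have "{d. A s c d} = {c+s, c+s+1, c+s+2}" using c unfolding A_def by auto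
    then show ?thesis by simp
  next
    case 2
    then have "{d. A s c d} = {1, 2*s+1, 2*s+2}" using c unfolding A_def by auto
    then show ?thesis using s by simp
  next
    case 3
    then have "{d. A s c d} = {1, 2, 2*s+2}" using c unfolding A_def by auto
    then show ?thesis using s by simp
  next
    case 4
    then obtain k where k: "c = k + s + 3" by (metis add.commute le_iff_add add.assoc)
    then have "{d. A s c d} = {k+1, k+2, k+3}" using c unfolding A_def by auto
    then show ?thesis by simp
  qed
qed

lemma card_S:
  assumes s: "3 \<le> s" and c: "c \<in> {1..2*s+2}"
  shows "card (S s c) = 3"
proof -
  have eq: "S s c = (\<lambda>d. {c,d}) ` {d. A s c d}"
  proof
    show "S s c \<subseteq> (\<lambda>d. {c,d}) ` {d. A s c d}"
    proof
      fix v assume "v \<in> S s c"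
      then have v: "v \<in> VV s" "c \<in> v" unfolding S_def by auto
      then obtain a b where ab: "A s a b" "v = {a,b}" using memV[of s] s by auto
      then show "v \<in> (\<lambda>d. {c,d}) ` {d. A s c d}"
        using v(2) A_sym by (auto simp: insert_commute)
    qed
  next
    show "(\<lambda>d. {c,d}) ` {d. A s c d} \<subseteq> S s c"
      unfolding S_def using memV[of s] s by auto
  qed
  have inj: "inj_on (\<lambda>d. {c,d}) {d. A s c d}"
    by (rule inj_onI) (auto simp: doubleton_eq_iff dest: A_neq[of s, rotated] simp: s)
  show ?thesis unfolding eq card_image[OF inj] using nbr_card[OF s] c by auto
qed

lemma double_count:
  assumes "finite V" "finite N"
  shows "(\<Sum>c\<in>N. card {v\<in>V. c \<in> g v}) = (\<Sum>v\<in>V. card {c\<in>N. c \<in> g v})"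
proof -
  have "(\<Sum>c\<in>N. card {v\<in>V. c \<in> g v}) = (\<Sum>c\<in>N. \<Sum>v\<in>V. if c \<in> g v then 1 else 0)"
    using assms by (simp add: sum.inter_filter[symmetric])
  also have "\<dots> = (\<Sum>v\<in>V. \<Sum>c\<in>N. if c \<in> g v then 1 else 0)"
    by (rule sum.swap)
  also have "\<dots> = (\<Sum>v\<in>V. card {c\<in>N. c \<in> g v})"
    using assms by (simp add: sum.inter_filter[symmetric])
  finally show ?thesis .
qed

lemma card_VV:
  assumes s: "3 \<le> s"
  shows "2 * card (VV s) = 3 * (2*s+2)"
proof -
  have "(\<Sum>c\<in>{1..2*s+2}. card {v\<in>VV s. c \<in> id v}) = (\<Sum>v\<in>VV s. card {c\<in>{1..2*s+2}. c \<in> id v})"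
    using finite_VV[of s] by (intro double_count) auto
  moreover have "(\<Sum>c\<in>{1..2*s+2}. card {v\<in>VV s. c \<in> id v}) = (\<Sum>c\<in>{1..2*s+2}. 3)"
    using card_S[OF s] unfolding S_def by (intro sum.cong) auto
  moreover have "(\<Sum>v\<in>VV s. card {c\<in>{1..2*s+2}. c \<in> id v}) = (\<Sum>v\<in>VV s. 2)"
  proof (intro sum.cong refl)
    fix v assume "v \<in> VV s"
    then have "{c\<in>{1..2*s+2}. c \<in> id v} = v" using VV_sub[of v s] by auto
    then show "card {c\<in>{1..2*s+2}. c \<in> id v} = 2" using VV_card \<open>v \<in> VV s\<close> by simp
  qed
  ultimately show ?thesis by simp
qed

definition homV :: "nat \<Rightarrow> (nat set \<Rightarrow> nat set) \<Rightarrow> bool" where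
  "homV s g \<longleftrightarrow> (\<forall>x\<in>VV s. g x \<in> VV s) \<and>
     (\<forall>x\<in>VV s. \<forall>y\<in>VV s. x \<inter> y = {} \<longrightarrow> g x \<inter> g y = {})"

lemma sum_all_eq:
  assumes "finite N" "\<forall>e\<in>N. (f e :: nat) \<le> k" "(\<Sum>e\<in>N. f e) = card N * k"
  shows "\<forall>e\<in>N. f e = k"
proof (rule ccontr)
  assume "\<not> (\<forall>e\<in>N. f e = k)"
  then obtain e where e: "e \<in> N" "f e < k" using assms(2) by fastforce
  have "(\<Sum>e\<in>N. f e) < (\<Sum>e\<in>N. k)"
    by (rule sum_strict_mono_ex1) (use assms e in auto)
  then show False using assms(3) by simp
qed

lemma common_nbr:
  assumes s: "3 \<le> s" and c: "1 \<le> c" "c + 1 \<le> 2*s+2"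
  shows "\<exists>d. A s c d \<and> A s (c+1) d"
proof (cases "c \<le> s + 1")
  case True
  then show ?thesis using c unfolding A_def by (intro exI[of _ "c+s+1"]) auto
next
  case False
  then show ?thesis using c unfolding A_def by (intro exI[of _ "c-s"]) auto
qed

lemma endo:
  assumes s: "3 \<le> s" and g: "homV s g"
  shows "\<exists>p. bij_betw p {1..2*s+2} {1..2*s+2} \<and> (\<forall>v\<in>VV s. g v = p ` v)"
proof -
  have s1: "1 \<le> s" using s by simp
  define N where "N = {1..2*s+2}"
  define T where "T e = {v\<in>VV s. e \<in> g v}" for e
  have gV: "\<And>v. v \<in> VV s \<Longrightarrow> g v \<in> VV s" using g unfolding homV_def by auto
  have gsub: "\<And>v. v \<in> VV s \<Longrightarrow> g v \<subseteq> N" using gV VV_sub unfolding N_def by blast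
  have Tpw: "\<forall>v\<in>T e. \<forall>w\<in>T e. v \<inter> w \<noteq> {}" for e
    using g unfolding homV_def T_def by blast
  have Tstar: "\<exists>c\<in>N. T e \<subseteq> S s c" if ne: "T e \<noteq> {}" for e
  proof -
    have "T e \<subseteq> VV s" unfolding T_def by auto
    then obtain c where c: "\<forall>v\<in>T e. c \<in> v"
      using star_common[OF s _ ne Tpw] by blast
    obtain v where v: "v \<in> T e" using ne by auto
    have "c \<in> N" using c v VV_sub unfolding T_def N_def by blast
    moreover have "T e \<subseteq> S s c" using c unfolding S_def T_def by auto
    ultimately show ?thesis by blast
  qed
  have Tle: "card (T e) \<le> 3" for e
  proof (cases "T e = {}")
    case True then show ?thesis by simp
  next
    case False
    then obtain c where c: "c \<in> N" "T e \<subseteq> S s c" using Tstar by blast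
    have "finite (S s c)" unfolding S_def using finite_VV by auto
    then have "card (T e) \<le> card (S s c)" using c card_mono by blast
    then show ?thesis using card_S[OF s] c unfolding N_def by simp
  qed
  have "(\<Sum>e\<in>N. card {v\<in>VV s. e \<in> g v}) = (\<Sum>v\<in>VV s. card {e\<in>N. e \<in> g v})"
    using finite_VV[of s] unfolding N_def by (intro double_count) auto
  also have "\<dots> = (\<Sum>v\<in>VV s. 2)"
  proof (intro sum.cong refl)
    fix v assume v: "v \<in> VV s"
    then have "{e\<in>N. e \<in> g v} = g v" using gsub by blast
    then show "card {e\<in>N. e \<in> g v} = 2" using VV_card[OF gV[OF v]] by simp
  qed
  also have "\<dots> = card N * 3" using card_VV[OF s] unfolding N_def by simp
  finally have sumT: "(\<Sum>e\<in>N. card (T e)) = card N * 3" unfolding T_def .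
  have T3: "\<forall>e\<in>N. card (T e) = 3"
    by (rule sum_all_eq) (use Tle sumT in \<open>auto simp: N_def\<close>)
  have "\<forall>e\<in>N. \<exists>c\<in>N. T e = S s c"
  proof
    fix e assume e: "e \<in> N"
    then have "T e \<noteq> {}" using T3 by fastforce
    then obtain c where c: "c \<in> N" "T e \<subseteq> S s c" using Tstar by blast
    have "finite (S s c)" unfolding S_def using finite_VV by auto
    moreover have "card (T e) = card (S s c)" using T3 e card_S[OF s] c unfolding N_def by simp
    ultimately have "T e = S s c" using c card_subset_eq by blast
    then show "\<exists>c\<in>N. T e = S s c" using c by blast
  qed
  then obtain \<pi> where pi: "\<forall>e\<in>N. \<pi> e \<in> N \<and> T e = S s (\<pi> e)" by metis
  have geq: "g v = {e\<in>N. \<pi> e \<in> v}" if v: "v \<in> VV s" for v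
  proof -
    have "e \<in> g v \<longleftrightarrow> \<pi> e \<in> v" if e: "e \<in> N" for e
    proof -
      have "e \<in> g v \<longleftrightarrow> v \<in> T e" using v unfolding T_def by auto
      also have "\<dots> \<longleftrightarrow> v \<in> S s (\<pi> e)" using pi e by auto
      also have "\<dots> \<longleftrightarrow> \<pi> e \<in> v" using v unfolding S_def by auto
      finally show ?thesis .
    qed
    then show ?thesis using gsub[OF v] by blast
  qed
  define h where "h c = card {e\<in>N. \<pi> e = c}" for c
  have hsum: "h a + h b = 2" if ab: "A s a b" for a b
  proof -
    have v: "{a,b} \<in> VV s" using memV[OF s1] ab by blast
    have ne: "a \<noteq> b" using A_neq[OF s1 ab] .
    have "{e\<in>N. \<pi> e \<in> {a,b}} = {e\<in>N. \<pi> e = a} \<union> {e\<in>N. \<pi> e = b}" by auto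
    moreover have "card ({e\<in>N. \<pi> e = a} \<union> {e\<in>N. \<pi> e = b}) = h a + h b"
      unfolding h_def by (rule card_Un_disjoint) (use ne in \<open>auto simp: N_def\<close>)
    ultimately have "card (g {a,b}) = h a + h b" using geq[OF v] by simp
    then show ?thesis using VV_card[OF gV[OF v]] by simp
  qed
  have hstep: "h c = h (c+1)" if cc: "1 \<le> c" "c + 1 \<le> 2*s+2" for c
  proof -
    obtain d where d: "A s c d" "A s (c+1) d" using common_nbr[OF s cc] by blast
    have "h c + h d = 2" using hsum[OF d(1)] .
    moreover have "h (c+1) + h d = 2" using hsum[OF d(2)] .
    ultimately show ?thesis by linarith
  qed
  have hconst: "\<forall>c. 1 \<le> c \<longrightarrow> c \<le> 2*s+2 \<longrightarrow> h c = h 1"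
  proof
    fix c show "1 \<le> c \<longrightarrow> c \<le> 2*s+2 \<longrightarrow> h c = h 1"
    proof (induction c)
      case 0 then show ?case by simp
    next
      case (Suc c)
      show ?case
      proof (cases "c = 0")
        case True then show ?thesis by simp
      next
        case False
        show ?thesis
        proof (intro impI)
          assume "1 \<le> Suc c" "Suc c \<le> 2*s+2"
          then have c1: "1 \<le> c" "c + 1 \<le> 2*s+2" using False by auto
          have "h c = h (c+1)" by (rule hstep[OF c1])
          moreover have "h c = h 1" using Suc.IH c1 by simp
          ultimately show "h (Suc c) = h 1" by simp
        qed
      qed
    qed
  qed
  have "(\<Sum>c\<in>N. card {e\<in>N. c \<in> {\<pi> e}}) = (\<Sum>e\<in>N. card {c\<in>N. c \<in> {\<pi> e}})"
    unfolding N_def by (rule double_count) auto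
  also have "\<dots> = (\<Sum>e\<in>N. 1)"
  proof (intro sum.cong refl)
    fix e assume "e \<in> N"
    then have "{c\<in>N. c \<in> {\<pi> e}} = {\<pi> e}" using pi by auto
    then show "card {c\<in>N. c \<in> {\<pi> e}} = 1" by simp
  qed
  finally have "(\<Sum>c\<in>N. card {e\<in>N. c \<in> {\<pi> e}}) = card N" by simp
  moreover have "card {e\<in>N. c \<in> {\<pi> e}} = h c" for c
    unfolding h_def by (metis singleton_iff)
  ultimately have "(\<Sum>c\<in>N. h c) = card N" by simp
  moreover have "(\<Sum>c\<in>N. h c) = (\<Sum>c\<in>N. h 1)"
  proof (rule sum.cong[OF refl])
    fix c assume "c \<in> N"
    then have "1 \<le> c" "c \<le> 2*s+2" unfolding N_def by auto
    then show "h c = h 1" using hconst by blast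
  qed
  ultimately have "card N * h 1 = card N" by simp
  moreover have "card N > 0" unfolding N_def by simp
  ultimately have h1: "h 1 = 1" by simp
  have surj: "\<pi> ` N = N"
  proof
    show "\<pi> ` N \<subseteq> N" using pi by auto
    show "N \<subseteq> \<pi> ` N"
    proof
      fix c assume c: "c \<in> N"
      then have "1 \<le> c" "c \<le> 2*s+2" unfolding N_def by auto
      then have "h c = 1" using hconst h1 by metis
      then have "{e\<in>N. \<pi> e = c} \<noteq> {}" unfolding h_def by (metis card.empty zero_neq_one)
      then show "c \<in> \<pi> ` N" by blast
    qed
  qed
  have inj: "inj_on \<pi> N"
    using surj by (intro eq_card_imp_inj_on) (auto simp: N_def)
  have bij: "bij_betw \<pi> N N" using inj surj unfolding bij_betw_def by blast
  define p where "p = the_inv_into N \<pi>"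
  have bp: "bij_betw p N N" unfolding p_def using bij by (rule bij_betw_the_inv_into)
  have "g v = p ` v" if v: "v \<in> VV s" for v
  proof -
    have vN: "v \<subseteq> N" using VV_sub v unfolding N_def by blast
    have "{e\<in>N. \<pi> e \<in> v} = p ` v"
    proof
      show "{e\<in>N. \<pi> e \<in> v} \<subseteq> p ` v"
      proof
        fix e assume "e \<in> {e\<in>N. \<pi> e \<in> v}"
        then have e: "e \<in> N" "\<pi> e \<in> v" by auto
        have "p (\<pi> e) = e" unfolding p_def using e inj by (simp add: the_inv_into_f_f)
        then show "e \<in> p ` v" using e by force
      qed
      show "p ` v \<subseteq> {e\<in>N. \<pi> e \<in> v}"
      proof
        fix e assume "e \<in> p ` v"
        then obtain c where c: "c \<in> v" "e = p c" by blast
        then have cN: "c \<in> N" using vN by blast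
        have "\<pi> (p c) = c" unfolding p_def using cN surj inj by (simp add: f_the_inv_into_f)
        moreover have "p c \<in> N" using bp cN bij_betw_apply by fastforce
        ultimately show "e \<in> {e\<in>N. \<pi> e \<in> v}" using c by auto
      qed
    qed
    then show ?thesis using geq[OF v] by simp
  qed
  then show ?thesis using bp unfolding N_def by blast
qed

lemma memV2:
  assumes s1: "1 \<le> s"
  shows "{a,b} \<in> VV s \<longleftrightarrow> A s a b"
proof
  assume "{a,b} \<in> VV s"
  then obtain x y where xy: "A s x y" "{a,b} = {x,y}" using memV[OF s1] by blast
  from xy(2) have "(a = x \<and> b = y) \<or> (a = y \<and> b = x)" by (rule pair_cases)
  then show "A s a b" using xy(1) A_sym by blast
next
  assume "A s a b" then show "{a,b} \<in> VV s" using memV[OF s1] by blast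
qed

lemma reflect:
  assumes s: "3 \<le> s" and P: "bij_betw P {1..2*s+2} {1..2*s+2}"
    and PV: "\<forall>v\<in>VV s. P ` v \<in> VV s"
    and ab: "a \<in> {1..2*s+2}" "b \<in> {1..2*s+2}" and e: "A s (P a) (P b)"
  shows "A s a b"
proof -
  have s1: "1 \<le> s" using s by simp
  let ?N = "{1..2*s+2}"
  have inj: "inj_on P ?N" using P bij_betw_def by blast
  have injF: "inj_on (\<lambda>v. P ` v) (VV s)"
  proof (rule inj_onI)
    fix v w assume "v \<in> VV s" "w \<in> VV s" "P ` v = P ` w"
    then show "v = w" using inj_on_image_eq_iff[OF inj VV_sub VV_sub] by simp
  qed
  have sub: "(\<lambda>v. P ` v) ` VV s \<subseteq> VV s" using PV by auto
  have "card ((\<lambda>v. P ` v) ` VV s) = card (VV s)" using card_image[OF injF] .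
  then have eq: "(\<lambda>v. P ` v) ` VV s = VV s"
    using card_subset_eq[OF finite_VV sub] by simp
  have "{P a, P b} \<in> VV s" using memV2[OF s1] e by blast
  then have "{P a, P b} \<in> (\<lambda>v. P ` v) ` VV s" using eq by simp
  then obtain v where v: "v \<in> VV s" "P ` v = {P a, P b}" by blast
  have "P ` v = P ` {a,b}" using v by simp
  moreover have "{a,b} \<subseteq> ?N" using ab by auto
  ultimately have "v = {a,b}" using inj_on_image_eq_iff[OF inj VV_sub[OF v(1)]] by blast
  then show ?thesis using v memV2[OF s1] by blast
qed

lemma final:
  assumes s: "3 \<le> s"
    and P: "bij_betw P {1..2*s+2} {1..2*s+2}" and Q: "bij_betw Q {1..2*s+2} {1..2*s+2}"
    and PV: "\<forall>v\<in>VV s. P ` v \<in> VV s" and QV: "\<forall>v\<in>VV s. Q ` v \<in> VV s"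
    and one: "\<forall>v\<in>VV s. \<exists>c. P ` v \<inter> Q ` v = {c}"
  shows False
proof -
  have s1: "1 \<le> s" using s by simp
  define N where "N = {1..2*s+2}"
  have injP: "inj_on P N" using P bij_betw_def N_def by blast
  have injQ: "inj_on Q N" using Q bij_betw_def N_def by blast
  have AN: "a \<in> N \<and> b \<in> N" if "A s a b" for a b using that unfolding A_def N_def by auto
  have oneA: "\<exists>c. {P a, P b} \<inter> {Q a, Q b} = {c}" if "A s a b" for a b
    using one[rule_format, OF memV2[OF s1, THEN iffD2, OF that]] by simp
  have PA: "A s (P a) (P b)" if "A s a b" for a b
    using PV[rule_format, OF memV2[OF s1, THEN iffD2, OF that]] memV2[OF s1] by simp
  have QA: "A s (Q a) (Q b)" if "A s a b" for a b
    using QV[rule_format, OF memV2[OF s1, THEN iffD2, OF that]] memV2[OF s1] by simp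
  have reflP: "A s a b" if "a \<in> N" "b \<in> N" "A s (P a) (P b)" for a b
    using reflect[OF s P PV] that unfolding N_def by blast
  have reflQ: "A s a b" if "a \<in> N" "b \<in> N" "A s (Q a) (Q b)" for a b
    using reflect[OF s Q QV] that unfolding N_def by blast
  show False
  proof (cases "\<exists>u\<in>N. P u = Q u")
    case True
    then obtain u0 where u0: "u0 \<in> N" "P u0 = Q u0" by blast
    have spread: "P w = Q w" if uv: "A s u v" and vw: "A s v w" and wu: "w \<noteq> u"
      and agree: "P u = Q u" for u v w
    proof -
      have uN: "u \<in> N" "v \<in> N" "w \<in> N" using AN uv vw by auto
      have nvu: "v \<noteq> u" using A_neq[OF s1 uv] by simp
      have nPv: "P v \<noteq> Q v"
      proof
        assume eqv: "P v = Q v"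
        obtain c where c: "{P u, P v} \<inter> {Q u, Q v} = {c}" using oneA[OF uv] by blast
        have "P u = c" "P v = c" using c agree eqv by auto
        then have "P u = P v" by simp
        then show False using inj_onD[OF injP _ uN(1) uN(2)] nvu by simp
      qed
      obtain c where c: "{P v, P w} \<inter> {Q v, Q w} = {c}" using oneA[OF vw] by blast
      then have "c \<in> {P v, P w}" "c \<in> {Q v, Q w}" by auto
      then consider "P v = Q w" | "P w = Q v" | "P w = Q w" using nPv by auto
      then show ?thesis
      proof cases
        case 1
        have "A s (Q u) (Q w)" using PA[OF uv] agree 1 by simp
        then have "A s u w" using reflQ uN by blast
        then show ?thesis using no_triangle[OF s uv vw] by blast
      next
        case 2
        have "A s (P u) (P w)" using QA[OF uv] agree 2 by simp
        then have "A s u w" using reflP uN by blast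
        then show ?thesis using no_triangle[OF s uv vw] by blast
      qed
    qed
    have up: "P (c+1) = Q (c+1)" if cc: "1 \<le> c" "c + 1 \<le> 2*s+2" "P c = Q c" for c
    proof -
      obtain d where d: "A s c d" "A s (c+1) d" using common_nbr[OF s cc(1,2)] by blast
      show ?thesis using spread[OF d(1) A_sym[OF d(2)] _ cc(3)] by simp
    qed
    have down: "P (c-1) = Q (c-1)" if cc: "2 \<le> c" "c \<le> 2*s+2" "P c = Q c" for c
    proof -
      have "1 \<le> c - 1" "c - 1 + 1 \<le> 2*s+2" using cc by auto
      then obtain d where d: "A s (c-1) d" "A s (c-1+1) d" using common_nbr[OF s] by blast
      have "A s c d" using d(2) cc by simp
      then show ?thesis using spread[OF _ A_sym[OF d(1)] _ cc(3)] cc by simp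
    qed
    have alld: "\<forall>k. k < u0 \<longrightarrow> P (u0 - k) = Q (u0 - k)"
    proof
      fix k show "k < u0 \<longrightarrow> P (u0 - k) = Q (u0 - k)"
      proof (induction k)
        case 0 then show ?case using u0 by simp
      next
        case (Suc k)
        show ?case
        proof
          assume k: "Suc k < u0"
          then have "P (u0 - k) = Q (u0 - k)" using Suc.IH by simp
          moreover have "2 \<le> u0 - k" "u0 - k \<le> 2*s+2" using k u0 unfolding N_def by auto
          ultimately have "P (u0 - k - 1) = Q (u0 - k - 1)" by (rule down[rotated 2])
          then show "P (u0 - Suc k) = Q (u0 - Suc k)" by (metis Suc_eq_plus1 diff_diff_left)
        qed
      qed
    qed
    have l: "u0 - 1 < u0" "u0 - (u0 - 1) = 1" using u0 unfolding N_def by auto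
    have "P (u0 - (u0 - 1)) = Q (u0 - (u0 - 1))" using alld l(1) by blast
    then have a1: "P 1 = Q 1" unfolding l(2) .
    have all: "\<forall>c. 1 \<le> c \<longrightarrow> c \<le> 2*s+2 \<longrightarrow> P c = Q c"
    proof
      fix c show "1 \<le> c \<longrightarrow> c \<le> 2*s+2 \<longrightarrow> P c = Q c"
      proof (induction c)
        case 0 then show ?case by simp
      next
        case (Suc c)
        show ?case
        proof (cases "c = 0")
          case True then show ?thesis using a1 by simp
        next
          case False
          show ?thesis
          proof (intro impI)
            assume "1 \<le> Suc c" "Suc c \<le> 2*s+2"
            then have c1: "1 \<le> c" "c + 1 \<le> 2*s+2" using False by auto
            then have "P c = Q c" using Suc.IH by simp
            then show "P (Suc c) = Q (Suc c)" using up[OF c1] by simp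
          qed
        qed
      qed
    qed
    have e: "A s 1 (s+1)" unfolding A_def by simp
    have "P 1 = Q 1" "P (s+1) = Q (s+1)" using all by auto
    moreover obtain c where "{P 1, P (s+1)} \<inter> {Q 1, Q (s+1)} = {c}" using oneA[OF e] by blast
    ultimately have "P 1 = P (s+1)" by auto
    moreover have "1 \<in> N" "s+1 \<in> N" unfolding N_def by auto
    ultimately show False using inj_onD[OF injP] s1 by fastforce
  next
    case False
    define \<phi> where "\<phi> u = the_inv_into N Q (P u)" for u
    have "VV s \<subseteq> (\<lambda>u. {u, \<phi> u}) ` N"
    proof
      fix v assume "v \<in> VV s"
      then obtain a b where ab: "A s a b" "v = {a,b}" using memV[OF s1] by blast
      have abN: "a \<in> N" "b \<in> N" using AN ab(1) by auto
      obtain c where c: "{P a, P b} \<inter> {Q a, Q b} = {c}" using oneA[OF ab(1)] by blast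
      have na: "P a \<noteq> Q a" "P b \<noteq> Q b" using False abN by auto
      from c have "c \<in> {P a, P b}" "c \<in> {Q a, Q b}" by auto
      then consider "P a = Q b" | "P b = Q a" using na by auto
      then show "v \<in> (\<lambda>u. {u, \<phi> u}) ` N"
      proof cases
        case 1
        then have "\<phi> a = b" unfolding \<phi>_def using the_inv_into_f_f[OF injQ abN(2)] by simp
        then show ?thesis using ab(2) abN by blast
      next
        case 2
        then have "\<phi> b = a" unfolding \<phi>_def using the_inv_into_f_f[OF injQ abN(1)] by simp
        then have "v = {b, \<phi> b}" using ab(2) by auto
        then show ?thesis using abN by blast
      qed
    qed
    then have "card (VV s) \<le> card ((\<lambda>u. {u, \<phi> u}) ` N)"
      by (intro card_mono) (auto simp: N_def)
    also have "\<dots> \<le> card N" by (rule card_image_le) (simp add: N_def)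
    finally have "card (VV s) \<le> 2*s+2" unfolding N_def by simp
    then show False using card_VV[OF s] by simp
  qed
qed

lemma hom_fst:
  assumes "graph_hom (cart_prod_verts (VV s) (VV s)) (cart_prod_adj stab_kneser_adj stab_kneser_adj)
            (VV s) stab_kneser_adj f" and "y \<in> VV s"
  shows "homV s (\<lambda>x. f (x, y))"
  using assms unfolding graph_hom_def homV_def cart_prod_verts_def cart_prod_adj_def stab_kneser_adj_def
  by auto

lemma hom_snd:
  assumes "graph_hom (cart_prod_verts (VV s) (VV s)) (cart_prod_adj stab_kneser_adj stab_kneser_adj)
            (VV s) stab_kneser_adj f" and "x \<in> VV s"
  shows "homV s (\<lambda>y. f (x, y))"
  using assms unfolding graph_hom_def homV_def cart_prod_verts_def cart_prod_adj_def stab_kneser_adj_def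
  by auto

theorem mainTheorem5:
  fixes s :: nat
  assumes "s \<ge> 3"
  shows "\<not> (\<exists>f. graph_hom
            (cart_prod_verts (stab_kneser_verts (2*s+2) 2 s) (stab_kneser_verts (2*s+2) 2 s))
            (cart_prod_adj stab_kneser_adj stab_kneser_adj)
            (stab_kneser_verts (2*s+2) 2 s) stab_kneser_adj f)"
proof
  assume "\<exists>f. graph_hom
            (cart_prod_verts (stab_kneser_verts (2*s+2) 2 s) (stab_kneser_verts (2*s+2) 2 s))
            (cart_prod_adj stab_kneser_adj stab_kneser_adj)
            (stab_kneser_verts (2*s+2) 2 s) stab_kneser_adj f"
  then obtain f where f: "graph_hom (cart_prod_verts (VV s) (VV s))
      (cart_prod_adj stab_kneser_adj stab_kneser_adj) (VV s) stab_kneser_adj f" by blast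
  have s: "3 \<le> s" using assms by simp
  have s1: "1 \<le> s" using s by simp
  define y1 where "y1 = {1, s+1}"
  define y2 where "y2 = {1, s+2}"
  have y1: "y1 \<in> VV s" unfolding y1_def using memV2[OF s1] unfolding A_def by auto
  have y2: "y2 \<in> VV s" unfolding y2_def using memV2[OF s1] unfolding A_def by auto
  obtain P where P: "bij_betw P {1..2*s+2} {1..2*s+2}" "\<forall>v\<in>VV s. f (v, y1) = P ` v"
    using endo[OF s hom_fst[OF f y1]] by blast
  obtain Q where Q: "bij_betw Q {1..2*s+2} {1..2*s+2}" "\<forall>v\<in>VV s. f (v, y2) = Q ` v"
    using endo[OF s hom_fst[OF f y2]] by blast
  have fV: "\<And>x y. x \<in> VV s \<Longrightarrow> y \<in> VV s \<Longrightarrow> f (x,y) \<in> VV s"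
    using f unfolding graph_hom_def cart_prod_verts_def by auto
  have PV: "\<forall>v\<in>VV s. P ` v \<in> VV s" using P(2) fV y1 by metis
  have QV: "\<forall>v\<in>VV s. Q ` v \<in> VV s" using Q(2) fV y2 by metis
  have one: "\<forall>v\<in>VV s. \<exists>c. P ` v \<inter> Q ` v = {c}"
  proof
    fix x assume x: "x \<in> VV s"
    obtain R where R: "bij_betw R {1..2*s+2} {1..2*s+2}" "\<forall>v\<in>VV s. f (x, v) = R ` v"
      using endo[OF s hom_snd[OF f x]] by blast
    have injR: "inj_on R {1..2*s+2}" using R(1) bij_betw_def by blast
    have "P ` x = R ` y1" using P(2) R(2) x y1 by metis
    moreover have "Q ` x = R ` y2" using Q(2) R(2) x y2 by metis
    moreover have "R (s+1) \<noteq> R (s+2)" "R 1 \<noteq> R (s+1)" "R 1 \<noteq> R (s+2)"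
      using inj_onD[OF injR] s1 by fastforce+
    ultimately have "P ` x \<inter> Q ` x = {R 1}" unfolding y1_def y2_def by auto
    then show "\<exists>c. P ` x \<inter> Q ` x = {c}" by blast
  qed
  show False using final[OF s P(1) Q(1) PV QV one] .
qed


end
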